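(* In the transductive setting, assume $|y(x)|\le M$ for all $x\in X$. Let $W\in\mathbb{R}^{(m+u)\times(m+u)}$ be a symmetric nonnegative weight matrix with all row sums positive, $D$ the diagonal matrix with $D_{ii}=\sum_j W_{ij}$, $Q=I-D^{-1/2}WD^{-1/2}$, and $\mu>0$. For a training set $S$, let $y_S\in\mathbb{R}^{m+u}$ have $i$th entry $y(x_i)$ if $x_i\in S$ and $0$ otherwise, and let the Consistency Method return $h_S=(\mu^{-1}Q+I)^{-1}y_S$. Then for any two training sets $S,S'$ differing in exactly one point, $\|h_S-h_{S'}\|_\infty\le\sqrt2\,M$.
   Context: Transductive setting: fixed full sample $X=\{x_1,\dots,x_{m+u}\}$ with real labels $y(x)$; training set $S\subset X$ of size $m$ with labels revealed, test set $T=X\setminus S$ of size $u$. Two training sets $S,S'$ differ in exactly one point if $S'=(S\setminus\{x\})\cup\{x'\}$ with $x\in S$, $x'\in X\setminus S$. *)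

theory Defs
  imports "HOL-Analysis.Analysis"
begin

text \<open>The full sample X = {x_1,...,x_(m+u)} is indexed by a finite type 'n with
  CARD('n) = m + u; labels are a function y :: 'n => real; training sets are subsets S of 'n.\<close>

definition degree_mat :: "real^'n^'n \<Rightarrow> real^'n^'n" where
  "degree_mat W = (\<chi> i j. if i = j then (\<Sum>k\<in>UNIV. W $ i $ k) else 0)"

definition inv_sqrt_degree_mat :: "real^'n^'n \<Rightarrow> real^'n^'n" where
  "inv_sqrt_degree_mat W = (\<chi> i j. if i = j then 1 / sqrt (degree_mat W $ i $ i) else 0)"

definition norm_laplacian :: "real^'n^'n \<Rightarrow> real^'n^'n" where
  "norm_laplacian W = mat 1 - inv_sqrt_degree_mat W ** W ** inv_sqrt_degree_mat W"

definition train_labels :: "('n::finite \<Rightarrow> real) \<Rightarrow> 'n set \<Rightarrow> real^'n" where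
  "train_labels y S = (\<chi> i. if i \<in> S then y i else 0)"

definition consistency_method ::
  "real^'n^'n \<Rightarrow> real \<Rightarrow> ('n::finite \<Rightarrow> real) \<Rightarrow> 'n set \<Rightarrow> real^'n" where
  "consistency_method W \<mu> y S =
     matrix_inv ((1 / \<mu>) *\<^sub>R norm_laplacian W + mat 1) *v train_labels y S"

definition differ_in_one :: "'n set \<Rightarrow> 'n set \<Rightarrow> bool" where
  "differ_in_one S S' \<longleftrightarrow> (\<exists>x x'. x \<in> S \<and> x' \<notin> S \<and> S' = (S - {x}) \<union> {x'})"

end

theory Submission
  imports Defs
begin

lemma quad_le:
  fixes W :: "real^'n^'n" and w :: "'n \<Rightarrow> real"
  assumes sym: "\<And>i j. W $ i $ j = W $ j $ i" and nn: "\<And>i j. W $ i $ j \<ge> 0"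
  shows "(\<Sum>i\<in>UNIV. \<Sum>j\<in>UNIV. W $ i $ j * w i * w j) \<le> (\<Sum>i\<in>UNIV. \<Sum>j\<in>UNIV. W $ i $ j * (w i)^2)"
proof -
  have a: "W $ i $ j * w i * w j \<le> W $ i $ j * ((w i)^2 + (w j)^2) / 2" for i j
  proof -
    have "2 * (w i * w j) \<le> (w i)^2 + (w j)^2" using zero_le_power2[of "w i - w j"]
      by (simp add: power2_diff algebra_simps)
    from mult_left_mono[OF this nn[of i j]] show ?thesis by (simp add: algebra_simps)
  qed
  have "(\<Sum>i\<in>UNIV. \<Sum>j\<in>UNIV. W $ i $ j * w i * w j) \<le> (\<Sum>i\<in>UNIV. \<Sum>j\<in>UNIV. W $ i $ j * ((w i)^2 + (w j)^2) / 2)"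
    by (intro sum_mono a)
  also have "\<dots> = ((\<Sum>i\<in>UNIV. \<Sum>j\<in>UNIV. W $ i $ j * (w i)^2) + (\<Sum>i\<in>UNIV. \<Sum>j\<in>UNIV. W $ i $ j * (w j)^2)) / 2"
    by (simp add: sum_divide_distrib[symmetric] sum.distrib[symmetric] algebra_simps)
  also have "(\<Sum>i\<in>UNIV. \<Sum>j\<in>UNIV. W $ i $ j * (w j)^2) = (\<Sum>i\<in>UNIV. \<Sum>j\<in>UNIV. W $ i $ j * (w i)^2)"
    by (subst sum.swap) (simp add: sym)
  finally show ?thesis by simp
qed

lemma lap_form:
  fixes W :: "real^'n^'n" and z :: "real^'n"
  assumes sym: "transpose W = W" and nn: "\<And>i j. W $ i $ j \<ge> 0"
    and pos: "\<And>i. (\<Sum>j\<in>UNIV. W $ i $ j) > 0"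
  shows "z \<bullet> ((inv_sqrt_degree_mat W ** W ** inv_sqrt_degree_mat W) *v z) \<le> z \<bullet> z"
proof -
  define d where "d i = (\<Sum>j\<in>UNIV. W $ i $ j)" for i
  define w where "w i = z $ i / sqrt (d i)" for i
  have sy: "W $ i $ j = W $ j $ i" for i j using sym by (metis transpose_def vec_lambda_beta)
  have dpos: "d i > 0" for i using pos d_def by simp
  have Dv: "inv_sqrt_degree_mat W *v v = (\<chi> i. v $ i / sqrt (d i))" for v :: "real^'n"
    by (simp add: inv_sqrt_degree_mat_def degree_mat_def d_def matrix_vector_mult_def vec_eq_iff
        if_distrib[where f="\<lambda>x. x * _"] sum.delta cong: if_cong)
  have "(inv_sqrt_degree_mat W ** W ** inv_sqrt_degree_mat W) *v z
        = inv_sqrt_degree_mat W *v (W *v (inv_sqrt_degree_mat W *v z))"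
    by (simp add: matrix_vector_mul_assoc matrix_mul_assoc)
  also have "\<dots> = (\<chi> i. (\<Sum>j\<in>UNIV. W $ i $ j * w j) / sqrt (d i))"
    by (simp only: Dv) (simp add: matrix_vector_mult_def w_def)
  finally have e: "(inv_sqrt_degree_mat W ** W ** inv_sqrt_degree_mat W) *v z = (\<chi> i. (\<Sum>j\<in>UNIV. W $ i $ j * w j) / sqrt (d i))" .
  have "z \<bullet> ((inv_sqrt_degree_mat W ** W ** inv_sqrt_degree_mat W) *v z)
      = (\<Sum>i\<in>UNIV. w i * (\<Sum>j\<in>UNIV. W $ i $ j * w j))"
    by (simp add: e inner_vec_def w_def)
  also have "\<dots> = (\<Sum>i\<in>UNIV. \<Sum>j\<in>UNIV. W $ i $ j * w i * w j)"
    by (simp add: sum_distrib_left algebra_simps)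
  also have "\<dots> \<le> (\<Sum>i\<in>UNIV. \<Sum>j\<in>UNIV. W $ i $ j * (w i)^2)"
    by (rule quad_le[OF sy nn])
  also have "\<dots> = (\<Sum>i\<in>UNIV. d i * (w i)^2)"
    by (simp add: d_def sum_distrib_right)
  also have "\<dots> = z \<bullet> z"
  proof -
    have "d i * (w i)^2 = z $ i * z $ i" for i
      using dpos[of i] by (simp add: w_def power_divide power2_eq_square[symmetric])
    then show ?thesis by (simp add: inner_vec_def)
  qed
  finally show ?thesis .
qed

theorem mainTheorem9:
  fixes W :: "real^'n^'n" and y :: "'n \<Rightarrow> real" and M \<mu> :: real and S S' :: "'n set"
  assumes "\<And>i. \<bar>y i\<bar> \<le> M"
    and "transpose W = W"
    and "\<And>i j. W $ i $ j \<ge> 0"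
    and "\<And>i. (\<Sum>j\<in>UNIV. W $ i $ j) > 0"
    and "\<mu> > 0"
    and "differ_in_one S S'"
  shows "infnorm (consistency_method W \<mu> y S - consistency_method W \<mu> y S') \<le> sqrt 2 * M"
proof -
  define A where "A = (1 / \<mu>) *\<^sub>R norm_laplacian W + mat 1"
  have Aform: "z \<bullet> z \<le> z \<bullet> (A *v z)" for z
  proof -
    have "A *v z = (1/\<mu>) *\<^sub>R (z - (inv_sqrt_degree_mat W ** W ** inv_sqrt_degree_mat W) *v z) + z"
    proof -
    have sc: "((1/\<mu>) *\<^sub>R B) *v u = (1/\<mu>) *\<^sub>R (B *v u)" for B :: "real^'n^'n" and u
      by (simp add: vec_eq_iff matrix_vector_mult_def scaleR_sum_right sum_divide_distrib)
    show ?thesis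
    by (simp add: A_def norm_laplacian_def matrix_vector_mult_add_rdistrib sc
          matrix_vector_mult_diff_rdistrib)
  qed
    then have "z \<bullet> (A *v z) = (1/\<mu>) * (z \<bullet> z - z \<bullet> ((inv_sqrt_degree_mat W ** W ** inv_sqrt_degree_mat W) *v z)) + z \<bullet> z"
      by (simp add: inner_add_right inner_diff_right)
    moreover have "0 \<le> (1/\<mu>) * (z \<bullet> z - z \<bullet> ((inv_sqrt_degree_mat W ** W ** inv_sqrt_degree_mat W) *v z))"
      using lap_form[OF assms(2,3,4), of z] assms(5) by simp
    ultimately show ?thesis by linarith
  qed
  have inj: "\<forall>x. A *v x = 0 \<longrightarrow> x = 0"
  proof (intro allI impI)
    fix x assume "A *v x = 0"
    then have "x \<bullet> x \<le> 0" using Aform[of x] by simp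
    then show "x = 0" using inner_ge_zero[of x] by simp
  qed
  then have "invertible A"
    using matrix_left_invertible_ker invertible_left_inverse by blast
  then have AI: "A ** matrix_inv A = mat 1"
    unfolding matrix_inv_def invertible_def by (rule someI2_ex) auto
  define v where "v = train_labels y S - train_labels y S'"
  define z where "z = matrix_inv A *v v"
  have Az: "A *v z = v" by (simp add: z_def matrix_vector_mul_assoc AI)
  have diff: "consistency_method W \<mu> y S - consistency_method W \<mu> y S' = z"
    by (simp add: consistency_method_def A_def[symmetric] z_def v_def matrix_vector_mult_diff_distrib)
  have nz: "norm z \<le> norm v"
  proof (cases "z = 0")
    case True then show ?thesis by simp
  next
    case False
    have "norm z ^ 2 \<le> z \<bullet> v" using Aform[of z] Az by (simp add: power2_norm_eq_inner)
    also have "\<dots> \<le> norm z * norm v" by (rule norm_cauchy_schwarz)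
    finally have "norm z * norm z \<le> norm z * norm v" by (simp add: power2_eq_square)
    then show ?thesis using False by simp
  qed
  obtain x x' where xx: "x \<in> S" "x' \<notin> S" "S' = (S - {x}) \<union> {x'}"
    using assms(6) unfolding differ_in_one_def by blast
  have xne: "x \<noteq> x'" using xx by auto
  have v_eq: "v = (\<chi> i. if i = x then y x else if i = x' then - y x' else 0)"
    unfolding v_def train_labels_def vec_eq_iff using xx(1,2) xne by (simp add: xx(3))
  have "v \<bullet> v = (\<Sum>i\<in>UNIV. v$i * v$i)" by (simp add: inner_vec_def)
  also have "\<dots> = (\<Sum>i\<in>{x,x'}. v$i * v$i)"
    by (rule sum.mono_neutral_right) (auto simp: v_eq)
  also have "\<dots> = (y x)^2 + (y x')^2"
    using xne by (simp add: v_eq power2_eq_square)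
  also have "\<dots> \<le> 2 * M^2"
  proof -
    have "(y x)^2 \<le> M^2" using power_mono[OF assms(1)[of x] abs_ge_zero, of 2] by simp
    moreover have "(y x')^2 \<le> M^2" using power_mono[OF assms(1)[of x'] abs_ge_zero, of 2] by simp
    ultimately show ?thesis by simp
  qed
  finally have "norm v ^ 2 \<le> (sqrt 2 * M)^2"
    using assms(1)[of x] by (simp add: power2_norm_eq_inner power_mult_distrib)
  then have "norm v \<le> sqrt 2 * M"
  proof (rule power2_le_imp_le)
    show "0 \<le> sqrt 2 * M" using assms(1)[of x] abs_ge_zero[of "y x"] by simp
  qed
  then show ?thesis unfolding diff using nz infnorm_le_norm[of z] by linarith
qed

end
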